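(* Let $\psi$ be admissible, let $Q=Q(\partial_\psi)$ be a $\partial_\psi$-delta operator with $\partial_\psi$-basic polynomial sequence $(p_n)_{n\ge0}$, and let $\hat x_{Q}$ be its dual operator. (i) For an arbitrary sequence $(q_n)_{n\ge0}$ of polynomials in one variable, $T=\sum_{n\ge0}q_n(\hat x_{Q})\,Q^n$ defines a linear operator $P\to P$ (the sum being finite on each polynomial). (ii) Conversely, for every linear operator $T:P\to P$ there exists a unique sequence $(q_n)_{n\ge0}$ of polynomials such that $T=\sum_{n\ge0}q_n(\hat x_{Q})\,Q^n$.
   Context: $\mathbf F$ is a field of characteristic zero, $P=\mathbf F[x]$, $\mathrm{End}(P)$ the algebra of linear operators on $P$. An admissible sequence is $\psi=(\psi_n)_{n\ge0}$ with $\psi_n\in\mathbf F$, $\psi_0=1$, $\psi_n\neq0$; $n_\psi=\psi_{n-1}/\psi_n$ ($n\ge1$), $0_\psi=0$, $n_\psi!=n_\psi(n-1)_\psi\cdots1_\psi$, $0_\psi!=1$. The $\psi$-derivative is $\partial_\psi x^n=n_\psi x^{n-1}$; $E^y(\partial_\psi)=\sum_{k\ge0}\frac{y^k}{k_\psi!}\partial_\psi^{\,k}$ for $y\in\mathbf F$; $\Sigma_\psi=\{T\in\mathrm{End}(P):[T,E^\alpha(\partial_\psi)]=0\ \forall\alpha\in\mathbf F\}$. A $\partial_\psi$-delta operator is $Q\in\Sigma_\psi$ with $Q(x)$ a nonzero constant; its $\partial_\psi$-basic polynomial sequence is $(p_n)$ with $\deg p_n=n$, $p_0=1$, $p_n(0)=0$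 ($n>0$), $Qp_n=n_\psi p_{n-1}$. The dual operator $\hat x_Q$ is the linear map on $P$ with $\hat x_Qp_n=\frac{n+1}{(n+1)_\psi}p_{n+1}$ ($n\ge0$). *)

theory Defs
  imports "HOL-Computational_Algebra.Polynomial"
begin

text \<open>P = F[x] is represented by the type 'a poly, with 'a :: field_char_0.\<close>

definition lin_op :: "('a::field poly \<Rightarrow> 'a poly) \<Rightarrow> bool" where
  "lin_op T \<longleftrightarrow> (\<forall>f g. T (f + g) = T f + T g) \<and> (\<forall>c f. T (smult c f) = smult c (T f))"

definition admissible :: "(nat \<Rightarrow> 'a::field) \<Rightarrow> bool" where
  "admissible psi \<longleftrightarrow> psi 0 = 1 \<and> (\<forall>n. psi n \<noteq> 0)"

definition npsi :: "(nat \<Rightarrow> 'a::field) \<Rightarrow> nat \<Rightarrow> 'a" where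
  "npsi psi n = (if n = 0 then 0 else psi (n - 1) / psi n)"

definition psi_fact :: "(nat \<Rightarrow> 'a::field) \<Rightarrow> nat \<Rightarrow> 'a" where
  "psi_fact psi n = (\<Prod>k=1..n. npsi psi k)"

definition psi_deriv :: "(nat \<Rightarrow> 'a::field) \<Rightarrow> 'a poly \<Rightarrow> 'a poly" where
  "psi_deriv psi p = (\<Sum>k\<le>degree p. monom (coeff p k * npsi psi k) (k - 1))"

text \<open>E^y(psi-derivative) = sum_k y^k / k_psi! (psi-derivative)^k; the sum is finite on each
  polynomial since (psi-derivative)^k p = 0 for k > degree p.\<close>
definition psi_exp :: "(nat \<Rightarrow> 'a::field) \<Rightarrow> 'a \<Rightarrow> 'a poly \<Rightarrow> 'a poly" where
  "psi_exp psi y p = (\<Sum>k\<le>degree p. smult (y ^ k / psi_fact psi k) ((psi_deriv psi ^^ k) p))"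

definition Sigma_psi :: "(nat \<Rightarrow> 'a::field) \<Rightarrow> ('a poly \<Rightarrow> 'a poly) set" where
  "Sigma_psi psi = {T. lin_op T \<and> (\<forall>\<alpha>. T \<circ> psi_exp psi \<alpha> = psi_exp psi \<alpha> \<circ> T)}"

definition psi_delta :: "(nat \<Rightarrow> 'a::field) \<Rightarrow> ('a poly \<Rightarrow> 'a poly) \<Rightarrow> bool" where
  "psi_delta psi Q \<longleftrightarrow> Q \<in> Sigma_psi psi \<and> degree (Q [:0, 1:]) = 0 \<and> Q [:0, 1:] \<noteq> 0"

definition psi_basic_seq ::
  "(nat \<Rightarrow> 'a::field) \<Rightarrow> ('a poly \<Rightarrow> 'a poly) \<Rightarrow> (nat \<Rightarrow> 'a poly) \<Rightarrow> bool" where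
  "psi_basic_seq psi Q p \<longleftrightarrow>
     (\<forall>n. degree (p n) = n) \<and> p 0 = 1 \<and> (\<forall>n>0. poly (p n) 0 = 0) \<and>
     (\<forall>n>0. Q (p n) = smult (npsi psi n) (p (n - 1)))"

definition dual_op ::
  "(nat \<Rightarrow> 'a::field_char_0) \<Rightarrow> (nat \<Rightarrow> 'a poly) \<Rightarrow> ('a poly \<Rightarrow> 'a poly) \<Rightarrow> bool" where
  "dual_op psi p X \<longleftrightarrow> lin_op X \<and>
     (\<forall>n. X (p n) = smult (of_nat (n + 1) / npsi psi (n + 1)) (p (n + 1)))"

definition op_poly :: "'a::field poly \<Rightarrow> ('a poly \<Rightarrow> 'a poly) \<Rightarrow> 'a poly \<Rightarrow> 'a poly" where
  "op_poly q X f = (\<Sum>i\<le>degree q. smult (coeff q i) ((X ^^ i) f))"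

definition series_term ::
  "(nat \<Rightarrow> 'a::field poly) \<Rightarrow> ('a poly \<Rightarrow> 'a poly) \<Rightarrow> ('a poly \<Rightarrow> 'a poly) \<Rightarrow> 'a poly \<Rightarrow> nat \<Rightarrow> 'a poly" where
  "series_term q X Q f n = op_poly (q n) X ((Q ^^ n) f)"

text \<open>sum_n q_n(X) Q^n, applied to f: the sum of the (finitely many, see the theorem) nonzero terms.\<close>
definition series_op ::
  "(nat \<Rightarrow> 'a::field poly) \<Rightarrow> ('a poly \<Rightarrow> 'a poly) \<Rightarrow> ('a poly \<Rightarrow> 'a poly) \<Rightarrow> 'a poly \<Rightarrow> 'a poly" where
  "series_op q X Q f = (\<Sum>n\<in>{n. series_term q X Q f n \<noteq> 0}. series_term q X Q f n)"

end

theory Submission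
  imports Defs
begin

lemma smult_sum_right: "smult c (\<Sum>x\<in>A. g x) = (\<Sum>x\<in>A. smult c (g x))"
  by (induction A rule: infinite_finite_induct) (simp_all add: smult_add_right)

lemma lin_add: "lin_op T \<Longrightarrow> T (f + g) = T f + T g"
  by (simp add: lin_op_def)

lemma lin_smult: "lin_op T \<Longrightarrow> T (smult c f) = smult c (T f)"
  by (simp add: lin_op_def)

lemma lin_zero: "lin_op T \<Longrightarrow> T 0 = 0"
  using lin_smult[of T 0 0] by simp

lemma lin_minus: "lin_op T \<Longrightarrow> T (f - g) = T f - T g"
proof -
  assume l: "lin_op T"
  have "T f = T (f - g) + T g" using lin_add[OF l, of "f - g" g] by simp
  then show ?thesis by (simp add: eq_diff_eq)
qed

lemma lin_sum: "lin_op T \<Longrightarrow> T (\<Sum>x\<in>A. g x) = (\<Sum>x\<in>A. T (g x))"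
  by (induction A rule: infinite_finite_induct) (simp_all add: lin_zero lin_add)

lemma lin_comp: "lin_op S \<Longrightarrow> lin_op T \<Longrightarrow> lin_op (\<lambda>f. S (T f))"
  by (simp add: lin_op_def)

lemma lin_funpow: "lin_op T \<Longrightarrow> lin_op (T ^^ n)"
proof (induction n)
  case 0
  then show ?case by (simp add: lin_op_def)
next
  case (Suc n)
  then show ?case by (simp add: lin_op_def)
qed

locale sys =
  fixes Q X :: "'a::field poly \<Rightarrow> 'a poly" and p :: "nat \<Rightarrow> 'a poly" and a b :: "nat \<Rightarrow> 'a"
  assumes linQ: "lin_op Q" and linX: "lin_op X"
    and degp: "\<And>n. degree (p n) = n" and p0: "p 0 = 1"
    and Qp0: "Q (p 0) = 0" and QpS: "\<And>n. Q (p (Suc n)) = smult (a n) (p n)"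
    and a_nz: "\<And>n. a n \<noteq> 0"
    and XpS: "\<And>n. X (p n) = smult (b n) (p (Suc n))" and b_nz: "\<And>n. b n \<noteq> 0"
begin

lemma p_nz: "p n \<noteq> 0"
proof (cases n)
  case 0 then show ?thesis by (simp add: p0)
next
  case (Suc m)
  then have "degree (p n) \<noteq> 0" by (simp add: degp)
  then show ?thesis by auto
qed

lemma span: "degree f \<le> N \<Longrightarrow> \<exists>c. f = (\<Sum>i\<le>N. smult (c i) (p i))"
proof (induction N arbitrary: f)
  case 0
  then have "f = [:coeff f 0:]" by (simp add: degree_0_id)
  then have "f = smult (coeff f 0) (p 0)" by (simp add: p0)
  then show ?case by (intro exI[of _ "\<lambda>_. coeff f 0"]) simp
next
  case (Suc N)
  define c0 where "c0 = coeff f (Suc N) / lead_coeff (p (Suc N))"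
  define g where "g = f - smult c0 (p (Suc N))"
  have lc: "lead_coeff (p (Suc N)) \<noteq> 0" using p_nz by simp
  have "degree (smult c0 (p (Suc N))) \<le> Suc N"
    using degree_smult_le[of c0 "p (Suc N)"] degp[of "Suc N"] by simp
  then have dg1: "degree g \<le> Suc N" unfolding g_def
    using Suc.prems by (intro degree_diff_le) auto
  have gS: "coeff g (Suc N) = 0" unfolding g_def c0_def using lc degp[of "Suc N"] by simp
  have "\<forall>i>N. coeff g i = 0"
  proof (intro allI impI)
    fix i assume "N < i"
    then consider "i = Suc N" | "Suc N < i" by linarith
    then show "coeff g i = 0"
    proof cases
      case 1 then show ?thesis using gS by simp
    next
      case 2 then show ?thesis using dg1 by (intro coeff_eq_0) simp
    qed
  qed
  then have "degree g \<le> N" by (simp add: degree_le)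
  then obtain c where c: "g = (\<Sum>i\<le>N. smult (c i) (p i))" using Suc.IH by blast
  have "f = g + smult c0 (p (Suc N))" unfolding g_def by simp
  also have "\<dots> = (\<Sum>i\<le>N. smult ((c(Suc N := c0)) i) (p i)) + smult ((c(Suc N := c0)) (Suc N)) (p (Suc N))"
    using c by simp
  also have "\<dots> = (\<Sum>i\<le>Suc N. smult ((c(Suc N := c0)) i) (p i))"
    by (simp add: sum.atMost_Suc)
  finally show ?case by blast
qed

lemma indep: "(\<Sum>i\<le>N. smult (c i) (p i)) = 0 \<Longrightarrow> i \<le> N \<Longrightarrow> c i = 0"
proof (induction N arbitrary: i)
  case 0
  then show ?case using p_nz[of 0] by simp
next
  case (Suc N)
  have z: "\<forall>i\<le>N. coeff (p i) (Suc N) = 0" by (simp add: coeff_eq_0 degp)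
  have "0 = coeff (\<Sum>i\<le>Suc N. smult (c i) (p i)) (Suc N)"
    by (subst Suc.prems(1)) simp
  also have "\<dots> = (\<Sum>i\<le>Suc N. c i * coeff (p i) (Suc N))"
    by (simp add: coeff_sum)
  also have "\<dots> = c (Suc N) * coeff (p (Suc N)) (Suc N)"
    using z by (simp add: sum.atMost_Suc)
  finally have "c (Suc N) * coeff (p (Suc N)) (Suc N) = 0" by simp
  moreover have "coeff (p (Suc N)) (Suc N) \<noteq> 0" using p_nz[of "Suc N"] degp[of "Suc N"]
    by (metis leading_coeff_0_iff)
  ultimately have cN: "c (Suc N) = 0" by simp
  then have "(\<Sum>i\<le>N. smult (c i) (p i)) = 0" using Suc.prems(1) by (simp add: sum.atMost_Suc)
  then show ?case using Suc.IH Suc.prems(2) cN by (cases "i = Suc N") auto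
qed

lemma basis_eq:
  assumes "lin_op T" "lin_op S" "\<And>m. T (p m) = S (p m)"
  shows "T = S"
proof
  fix f
  obtain c where c: "f = (\<Sum>i\<le>degree f. smult (c i) (p i))" using span by blast
  have "T f = T (\<Sum>i\<le>degree f. smult (c i) (p i))" by (rule arg_cong[OF c])
  also have "\<dots> = (\<Sum>i\<le>degree f. smult (c i) (T (p i)))"
    by (simp only: lin_sum[OF assms(1)] lin_smult[OF assms(1)])
  also have "\<dots> = (\<Sum>i\<le>degree f. smult (c i) (S (p i)))" using assms(3) by simp
  also have "\<dots> = S (\<Sum>i\<le>degree f. smult (c i) (p i))"
    by (simp only: lin_sum[OF assms(2)] lin_smult[OF assms(2)])
  also have "\<dots> = S f" by (rule arg_cong[OF c[symmetric]])
  finally show "T f = S f" .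
qed

lemma Qpow_le: "n \<le> m \<Longrightarrow> \<exists>c. c \<noteq> 0 \<and> (Q ^^ n) (p m) = smult c (p (m - n))"
proof (induction n)
  case 0
  then show ?case by (intro exI[of _ 1]) simp
next
  case (Suc n)
  then obtain c where c: "c \<noteq> 0" "(Q ^^ n) (p m) = smult c (p (m - n))" by auto
  have mn: "m - n = Suc (m - Suc n)" using Suc.prems by simp
  have "(Q ^^ Suc n) (p m) = Q (smult c (p (m - n)))" by (simp only: funpow.simps(2) o_apply c(2))
  also have "\<dots> = smult c (Q (p (Suc (m - Suc n))))" by (simp only: lin_smult[OF linQ] mn)
  also have "\<dots> = smult (c * a (m - Suc n)) (p (m - Suc n))" by (simp only: QpS smult_smult)
  finally have "(Q ^^ Suc n) (p m) = smult (c * a (m - Suc n)) (p (m - Suc n))" .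
  moreover have "c * a (m - Suc n) \<noteq> 0" using c(1) a_nz by simp
  ultimately show ?case by blast
qed

lemma Qpow_gt: "m < n \<Longrightarrow> (Q ^^ n) (p m) = 0"
proof (induction n)
  case 0
  then show ?case by simp
next
  case (Suc n)
  show ?case
  proof (cases "m < n")
    case True
    then show ?thesis using Suc.IH by (simp add: lin_zero[OF linQ])
  next
    case False
    then have "m = n" using Suc.prems by simp
    then obtain c where "(Q ^^ n) (p m) = smult c (p 0)" using Qpow_le[of n m] by auto
    then show ?thesis by (simp add: lin_smult[OF linQ] Qp0)
  qed
qed

lemma Qpow_deg: "degree f < n \<Longrightarrow> (Q ^^ n) f = 0"
proof -
  assume d: "degree f < n"
  obtain c where c: "f = (\<Sum>i\<le>degree f. smult (c i) (p i))" using span by blast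
  have l: "lin_op (Q ^^ n)" by (rule lin_funpow[OF linQ])
  have "(Q ^^ n) f = (Q ^^ n) (\<Sum>i\<le>degree f. smult (c i) (p i))" by (rule arg_cong[OF c])
  also have "\<dots> = (\<Sum>i\<le>degree f. smult (c i) ((Q ^^ n) (p i)))"
    by (simp only: lin_sum[OF l] lin_smult[OF l])
  also have "\<dots> = 0" using d by (intro sum.neutral) (simp add: Qpow_gt)
  finally show ?thesis .
qed

lemma Xpow: "\<exists>d. d \<noteq> 0 \<and> (X ^^ i) (p 0) = smult d (p i)"
proof (induction i)
  case 0
  then show ?case by (intro exI[of _ 1]) simp
next
  case (Suc i)
  then obtain d where d: "d \<noteq> 0" "(X ^^ i) (p 0) = smult d (p i)" by auto
  have "(X ^^ Suc i) (p 0) = X (smult d (p i))" by (simp only: funpow.simps(2) o_apply d(2))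
  also have "\<dots> = smult (d * b i) (p (Suc i))" by (simp only: lin_smult[OF linX] XpS smult_smult)
  finally have "(X ^^ Suc i) (p 0) = smult (d * b i) (p (Suc i))" .
  moreover have "d * b i \<noteq> 0" using d(1) b_nz by simp
  ultimately show ?case by blast
qed

definition dX where "dX i = (SOME d. d \<noteq> 0 \<and> (X ^^ i) (p 0) = smult d (p i))"

lemma dX: "dX i \<noteq> 0" "(X ^^ i) (p 0) = smult (dX i) (p i)"
  using someI_ex[OF Xpow[of i]] unfolding dX_def by auto

lemma op_poly_le: "degree r \<le> N \<Longrightarrow> op_poly r X f = (\<Sum>i\<le>N. smult (coeff r i) ((X ^^ i) f))"
  unfolding op_poly_def
  by (rule sum.mono_neutral_left) (auto simp: coeff_eq_0)

lemma op_poly_lin: "lin_op (op_poly r X)"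
  unfolding lin_op_def op_poly_def
  by (simp add: lin_add lin_smult lin_funpow[OF linX] smult_add_right sum.distrib
      smult_sum_right mult.commute)

lemma op_poly_diff: "op_poly (r - r') X f = op_poly r X f - op_poly r' X f"
proof -
  define N where "N = max (degree r) (degree r')"
  have "degree (r - r') \<le> N" unfolding N_def by (rule degree_diff_le) auto
  then show ?thesis
    by (simp add: op_poly_le[of _ N] N_def smult_diff_left sum_subtractf)
qed

lemma op_poly_p0: "op_poly r X (p 0) = (\<Sum>i\<le>degree r. smult (coeff r i * dX i) (p i))"
  unfolding op_poly_def by (simp add: dX)

lemma op_poly_inj0: "op_poly r X (p 0) = 0 \<Longrightarrow> r = 0"
proof -
  assume "op_poly r X (p 0) = 0"
  then have "\<And>i. i \<le> degree r \<Longrightarrow> coeff r i * dX i = 0"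
    using indep[of "\<lambda>i. coeff r i * dX i" "degree r"] op_poly_p0 by auto
  then have "\<And>i. coeff r i = 0"
    using dX(1) by (metis coeff_eq_0 mult_eq_0_iff not_le)
  then show "r = 0" by (simp add: poly_eq_iff)
qed

lemma op_poly_inj: "op_poly r X (p 0) = op_poly r' X (p 0) \<Longrightarrow> r = r'"
  using op_poly_inj0[of "r - r'"] by (simp add: op_poly_diff)

lemma op_poly_surj: "\<exists>r. op_poly r X (p 0) = g"
proof -
  obtain c where c: "g = (\<Sum>i\<le>degree g. smult (c i) (p i))" using span by blast
  define r where "r = (\<Sum>i\<le>degree g. monom (c i / dX i) i)"
  have cr: "coeff r k = (if k \<le> degree g then c k / dX k else 0)" for k
    unfolding r_def by (simp add: coeff_sum coeff_monom)
  have dr: "degree r \<le> degree g" by (rule degree_le) (simp add: cr)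
  have "op_poly r X (p 0) = (\<Sum>i\<le>degree g. smult (coeff r i) ((X ^^ i) (p 0)))"
    using op_poly_le[OF dr] .
  also have "\<dots> = (\<Sum>i\<le>degree g. smult (c i) (p i))"
    by (rule sum.cong) (auto simp: cr dX)
  finally show ?thesis using c by metis
qed

lemma term_lin: "lin_op (\<lambda>f. series_term q X Q f n)"
  unfolding series_term_def by (rule lin_comp[OF op_poly_lin lin_funpow[OF linQ]])

lemma term_zero: "degree f < n \<Longrightarrow> series_term q X Q f n = 0"
  unfolding series_term_def by (simp add: Qpow_deg lin_zero[OF op_poly_lin])

lemma term_fin: "finite {n. series_term q X Q f n \<noteq> 0}"
proof -
  have "{n. series_term q X Q f n \<noteq> 0} \<subseteq> {..degree f}"
    by (metis (mono_tags, lifting) atMost_iff mem_Collect_eq not_le subsetI term_zero)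
  then show ?thesis by (rule finite_subset) simp
qed

lemma series_le: "degree f \<le> N \<Longrightarrow> series_op q X Q f = (\<Sum>n\<le>N. series_term q X Q f n)"
  unfolding series_op_def
proof (rule sum.mono_neutral_left)
  assume d: "degree f \<le> N"
  show "{n. series_term q X Q f n \<noteq> 0} \<subseteq> {..N}"
  proof
    fix x assume "x \<in> {n. series_term q X Q f n \<noteq> 0}"
    then have "\<not> degree f < x" using term_zero[of f x q] by auto
    then show "x \<in> {..N}" using d by simp
  qed
qed auto

lemma series_lin: "lin_op (series_op q X Q)"
proof -
  have "series_op q X Q (f + g) = series_op q X Q f + series_op q X Q g" for f g
  proof -
    define N where "N = max (degree f) (degree g)"
    have "degree (f + g) \<le> N" unfolding N_def by (rule degree_add_le) auto
    then show ?thesis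
      by (simp add: series_le[of _ N] N_def lin_add[OF term_lin] sum.distrib)
  qed
  moreover have "series_op q X Q (smult c f) = smult c (series_op q X Q f)" for c f
  proof -
    have "degree (smult c f) \<le> degree f" by (rule degree_smult_le)
    then show ?thesis
      by (simp add: series_le[of _ "degree f"] lin_smult[OF term_lin] smult_sum_right)
  qed
  ultimately show ?thesis unfolding lin_op_def by blast
qed

lemma series_p: "series_op q X Q (p m) = (\<Sum>n<m. series_term q X Q (p m) n) + series_term q X Q (p m) m"
  by (simp add: series_le[of _ m] degp lessThan_Suc_atMost[symmetric])

lemma uniq: "series_op q X Q = series_op q' X Q \<Longrightarrow> q = q'"
proof
  assume eq: "series_op q X Q = series_op q' X Q"
  fix m
  show "q m = q' m"
  proof (induction m rule: less_induct)
    case (less m)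
    have s: "(\<Sum>n<m. series_term q X Q (p m) n) = (\<Sum>n<m. series_term q' X Q (p m) n)"
      by (rule sum.cong) (simp_all add: series_term_def less)
    have "series_term q X Q (p m) m = series_term q' X Q (p m) m"
      using eq series_p[of q m] series_p[of q' m] s by simp
    moreover obtain c where c: "c \<noteq> 0" "(Q ^^ m) (p m) = smult c (p 0)"
      using Qpow_le[of m m] by auto
    ultimately have "smult c (op_poly (q m) X (p 0)) = smult c (op_poly (q' m) X (p 0))"
      by (simp add: series_term_def lin_smult[OF op_poly_lin])
    then show ?case by (rule op_poly_inj[OF smult_cancel[OF c(1)]])
  qed
qed

lemma exist:
  assumes T: "lin_op T"
  shows "\<exists>q. T = series_op q X Q"
proof -
  obtain R where R: "\<And>g. op_poly (R g) X (p 0) = g" using op_poly_surj by metis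
  have "\<forall>m. \<exists>c. c \<noteq> 0 \<and> (Q ^^ m) (p m) = smult c (p 0)"
  proof
    fix m show "\<exists>c. c \<noteq> 0 \<and> (Q ^^ m) (p m) = smult c (p 0)" using Qpow_le[of m m] by simp
  qed
  then obtain cQ where cQ: "\<And>m. cQ m \<noteq> 0" "\<And>m. (Q ^^ m) (p m) = smult (cQ m) (p 0)"
    by metis
  define new where "new m prev = R (smult (inverse (cQ m))
      (T (p m) - (\<Sum>n<m. series_term prev X Q (p m) n)))" for m prev
  define F where "F = rec_nat (\<lambda>k::nat. new 0 (\<lambda>_. 0)) (\<lambda>m Fm. Fm(Suc m := new (Suc m) Fm))"
  have F0: "F 0 = (\<lambda>k. new 0 (\<lambda>_. 0))" by (simp add: F_def)
  have FS: "F (Suc m) = (F m)(Suc m := new (Suc m) (F m))" for m by (simp add: F_def)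
  define q where "q m = F m m" for m
  have FK: "k \<le> m \<Longrightarrow> F m k = q k" for k m
  proof (induction m)
    case 0 then show ?case by (simp add: q_def)
  next
    case (Suc m)
    show ?case
    proof (cases "k = Suc m")
      case True then show ?thesis by (simp add: q_def)
    next
      case False
      then have "F (Suc m) k = F m k" by (simp add: FS)
      then show ?thesis using Suc False by simp
    qed
  qed
  have new_cong: "(\<And>n. n < m \<Longrightarrow> prev n = prev' n) \<Longrightarrow> new m prev = new m prev'" for m prev prev'
  proof -
    assume h: "\<And>n. n < m \<Longrightarrow> prev n = prev' n"
    have "(\<Sum>n<m. series_term prev X Q (p m) n) = (\<Sum>n<m. series_term prev' X Q (p m) n)"
      by (rule sum.cong) (simp_all add: series_term_def h)
    then show ?thesis unfolding new_def by simp
  qed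
  have qnew: "q m = new m q" for m
  proof (cases m)
    case 0
    have "q m = new 0 (\<lambda>_. 0)" using 0 by (simp add: q_def F0)
    also have "\<dots> = new 0 q" by (rule new_cong) simp
    finally show ?thesis using 0 by simp
  next
    case (Suc k)
    have "q m = new (Suc k) (F k)" using Suc by (simp add: q_def FS)
    also have "\<dots> = new (Suc k) q" by (rule new_cong) (simp add: FK)
    finally show ?thesis using Suc by simp
  qed
  have "T (p m) = series_op q X Q (p m)" for m
  proof -
    define S where "S = (\<Sum>n<m. series_term q X Q (p m) n)"
    have "series_term q X Q (p m) m = smult (cQ m) (op_poly (q m) X (p 0))"
      by (simp add: series_term_def cQ lin_smult[OF op_poly_lin])
    also have "\<dots> = T (p m) - S"
      by (subst qnew) (simp add: new_def R S_def cQ(1))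
    finally show ?thesis by (simp add: series_p S_def)
  qed
  then show ?thesis using basis_eq[OF T series_lin] by blast
qed

end

theorem proposition3p3:
  fixes psi :: "nat \<Rightarrow> 'a::field_char_0"
    and Q X :: "'a poly \<Rightarrow> 'a poly"
    and p :: "nat \<Rightarrow> 'a poly"
  assumes "admissible psi"
    and "psi_delta psi Q"
    and "psi_basic_seq psi Q p"
    and "dual_op psi p X"
  shows "(\<forall>q :: nat \<Rightarrow> 'a poly.
            (\<forall>f. finite {n. series_term q X Q f n \<noteq> 0}) \<and> lin_op (series_op q X Q))
       \<and> (\<forall>T. lin_op T \<longrightarrow> (\<exists>!q :: nat \<Rightarrow> 'a poly. T = series_op q X Q))"
proof -
  have adm: "psi 0 = 1" "\<And>n. psi n \<noteq> 0" using assms(1) by (auto simp: admissible_def)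
  have nz: "\<And>n. npsi psi (Suc n) \<noteq> 0" using adm by (simp add: npsi_def)
  have QS: "Q \<in> Sigma_psi psi" and Qx: "degree (Q [:0, 1:]) = 0"
    using assms(2) by (auto simp: psi_delta_def)
  have linQ: "lin_op Q" and comm: "\<And>\<alpha>. Q \<circ> psi_exp psi \<alpha> = psi_exp psi \<alpha> \<circ> Q"
    using QS by (auto simp: Sigma_psi_def)
  have pc: "degree c = 0 \<Longrightarrow> psi_exp psi \<alpha> c = c" for c \<alpha>
    by (simp add: psi_exp_def psi_fact_def)
  have pd: "psi_deriv psi [:0, 1:] = [:npsi psi 1:]"
    by (simp add: psi_deriv_def monom_0)
  have px: "psi_exp psi 1 [:0, 1:] = [:1, 1:]"
    using nz[of 0] by (simp add: psi_exp_def psi_fact_def pd)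
  have "Q [:1, 1:] = Q [:0, 1:]"
    using fun_cong[OF comm[of 1], of "[:0, 1:]"] px pc[OF Qx] by simp
  moreover have "[:1, 1:] = [:0, 1:] + (1 :: 'a poly)" by (simp add: one_pCons)
  ultimately have Q1: "Q 1 = 0" using lin_add[OF linQ, of "[:0,1:]" 1] by simp
  have bs: "\<And>n. degree (p n) = n" "p 0 = 1" "\<And>n. Q (p (Suc n)) = smult (npsi psi (Suc n)) (p n)"
    using assms(3) unfolding psi_basic_seq_def by auto
  have du: "lin_op X" "\<And>n. X (p n) = smult (of_nat (Suc n) / npsi psi (Suc n)) (p (Suc n))"
    using assms(4) unfolding dual_op_def by auto
  have cz: "\<And>n. (1 + of_nat n :: 'a) \<noteq> 0"
    by (metis of_nat_Suc of_nat_eq_0_iff nat.distinct(1))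
  interpret sys Q X p "\<lambda>n. npsi psi (Suc n)" "\<lambda>n. of_nat (Suc n) / npsi psi (Suc n)"
    by unfold_locales (use bs du linQ Q1 nz cz in auto)
  show ?thesis using term_fin series_lin exist uniq by blast
qed


end
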